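(* Let $m\ge 2$ and suppose $B,D\subseteq\mathbb{Z}_m$ are $2$-$\{m;k_1,k_2;\mu\}$ SDS. (i) If, for some $b\in B$, the sets $B\setminus\{b\}$ and $D$ are $2$-$\{m;k_1-1,k_2;\mu-1;\frac{m-1}{2}\}$ ASDS, then $k_1=\frac{m+3}{4}$ and $\mu=\frac{m+3}{16}+\frac{k_2^2-k_2}{m-1}$. (ii) If, for some $b\in\mathbb{Z}_m\setminus(B\cup D)$, the sets $B\cup\{b\}$ and $D$ are $2$-$\{m;k_1+1,k_2;\mu;\frac{m-1}{2}\}$ ASDS, then $k_1=\frac{m-1}{4}$ and $\mu=\frac{m-5}{16}+\frac{k_2^2-k_2}{m-1}$.
   Context: For $B,D\subseteq\mathbb{Z}_m$ and $a\in\mathbb{Z}_m\setminus\{0\}$, let $N_{B,D}(a)=|\{(x,x')\in B\times B: x-x'\equiv a\}|+|\{(y,y')\in D\times D: y-y'\equiv a\}|$ (the total number of solutions of the congruences $x_i-x_j\equiv a$, $y_{i'}-y_{j'}\equiv a \pmod m$ with elements of $B$, resp. $D$). For integers $\mu$ and $0\le t\le m-1$, $B$ and $D$ are $2$-$\{m;k_1,k_2;\mu;t\}$ ASDS (almost supplementary difference sets) if $|B|=k_1$, $|D|=k_2$, $N_{B,D}(a)=\mu$ for exactly $t$ values $a\ne0$, and $N_{B,D}(a)=\mu+1$ for the remaining $m-1-t$ values $a\ne0$. They are $2$-$\{m;k_1,k_2;\mu\}$ SDS (supplementary difference sets) if $|B|=k_1$, $|D|=k_2$ and $N_{B,D}(a)=\mu$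 for all $a\ne 0$. *)

theory Defs
  imports Complex_Main
begin

text \<open>Z_m is represented by the integers {0..<m}; congruences are taken mod m.\<close>

definition Nsol :: "nat \<Rightarrow> int set \<Rightarrow> int set \<Rightarrow> int \<Rightarrow> nat" where
  "Nsol m B D a =
     card {(x, x'). x \<in> B \<and> x' \<in> B \<and> (x - x') mod int m = a mod int m}
   + card {(y, y'). y \<in> D \<and> y' \<in> D \<and> (y - y') mod int m = a mod int m}"

definition SDS :: "nat \<Rightarrow> nat \<Rightarrow> nat \<Rightarrow> int \<Rightarrow> int set \<Rightarrow> int set \<Rightarrow> bool" where
  "SDS m k1 k2 mu B D \<longleftrightarrow>
     B \<subseteq> {0..<int m} \<and> D \<subseteq> {0..<int m} \<and> card B = k1 \<and> card D = k2 \<and>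
     (\<forall>a \<in> {1..<int m}. int (Nsol m B D a) = mu)"

text \<open>The parameter t is
  taken as a real number so that values like (m-1)/2 can be passed literally; the
  condition forces t to be an integer with 0 <= t <= m-1.\<close>
definition ASDS :: "nat \<Rightarrow> nat \<Rightarrow> nat \<Rightarrow> int \<Rightarrow> real \<Rightarrow> int set \<Rightarrow> int set \<Rightarrow> bool" where
  "ASDS m k1 k2 mu t B D \<longleftrightarrow>
     B \<subseteq> {0..<int m} \<and> D \<subseteq> {0..<int m} \<and> card B = k1 \<and> card D = k2 \<and>
     0 \<le> t \<and> t \<le> real m - 1 \<and>
     real (card {a \<in> {1..<int m}. int (Nsol m B D a) = mu}) = t \<and>
     (\<forall>a \<in> {1..<int m}. int (Nsol m B D a) = mu \<or> int (Nsol m B D a) = mu + 1)"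

end

theory Submission
  imports Defs
begin

definition P :: "nat \<Rightarrow> int set \<Rightarrow> int \<Rightarrow> nat" where
  "P m S a = card {(x, x'). x \<in> S \<and> x' \<in> S \<and> (x - x') mod int m = a mod int m}"

lemma Nsol_P: "Nsol m B D a = P m B a + P m D a"
  unfolding Nsol_def P_def by simp

lemma mod_range:
  fixes x x' :: int
  assumes "x \<in> {0..<int m}" "x' \<in> {0..<int m}"
  shows "x \<noteq> x' \<Longrightarrow> (x - x') mod int m \<in> {1..<int m}"
    and "x = x' \<Longrightarrow> (x - x') mod int m = 0"
proof -
  assume ne: "x \<noteq> x'"
  show "(x - x') mod int m \<in> {1..<int m}"
  proof (cases "x > x'")
    case True
    then have "(x - x') mod int m = x - x'" using assms by (intro mod_pos_pos_trivial) auto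
    then show ?thesis using True assms by auto
  next
    case False
    then have "x < x'" using ne by auto
    have "(x - x') mod int m = (x - x' + int m) mod int m" by simp
    also have "\<dots> = x - x' + int m" using assms \<open>x < x'\<close> by (intro mod_pos_pos_trivial) auto
    finally show ?thesis using \<open>x < x'\<close> assms by auto
  qed
qed simp

lemma sumP:
  assumes S: "S \<subseteq> {0..<int m}"
  shows "(\<Sum>a\<in>{1..<int m}. P m S a) = card S * (card S - 1)"
proof -
  have fS: "finite S" using S finite_subset by blast
  define A where "A a = {(x, x'). x \<in> S \<and> x' \<in> S \<and> (x - x') mod int m = a mod int m}" for a
  have U: "(\<Union>a\<in>{1..<int m}. A a) = S \<times> S - (\<lambda>x. (x, x)) ` S"
  proof (rule set_eqI, clarify)
    fix x x'
    show "((x, x') \<in> (\<Union>a\<in>{1..<int m}. A a)) = ((x, x') \<in> S \<times> S - (\<lambda>x. (x, x)) ` S)"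
    proof
      assume "(x, x') \<in> (\<Union>a\<in>{1..<int m}. A a)"
      then obtain a where a: "a \<in> {1..<int m}" "x \<in> S" "x' \<in> S" "(x - x') mod int m = a mod int m"
        unfolding A_def by auto
      have "a mod int m = a" using a(1) by (intro mod_pos_pos_trivial) auto
      then have "x \<noteq> x'" using a mod_range(2)[of x m x'] S by auto
      then show "(x, x') \<in> S \<times> S - (\<lambda>x. (x, x)) ` S" using a by auto
    next
      assume h: "(x, x') \<in> S \<times> S - (\<lambda>x. (x, x)) ` S"
      then have ne: "x \<noteq> x'" and xs: "x \<in> S" "x' \<in> S" by auto
      let ?a = "(x - x') mod int m"
      have "x \<in> {0..<int m}" "x' \<in> {0..<int m}" using xs S by auto
      then have r: "?a \<in> {1..<int m}" using mod_range(1)[of x m x'] ne by blast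
      then have "?a mod int m = ?a" by simp
      then have "(x, x') \<in> A ?a" unfolding A_def using xs by auto
      then show "(x, x') \<in> (\<Union>a\<in>{1..<int m}. A a)" using r by blast
    qed
  qed
  have fA: "\<And>a. finite (A a)"
    by (rule finite_subset[of _ "S \<times> S"]) (auto simp: A_def fS)
  have disj: "\<forall>i\<in>{1..<int m}. \<forall>j\<in>{1..<int m}. i \<noteq> j \<longrightarrow> A i \<inter> A j = {}"
  proof (intro ballI impI)
    fix i j assume i: "i \<in> {1..<int m}" and j: "j \<in> {1..<int m}" and "i \<noteq> j"
    have "i mod int m = i" "j mod int m = j" using i j by (auto intro: mod_pos_pos_trivial)
    then show "A i \<inter> A j = {}" using \<open>i \<noteq> j\<close> unfolding A_def by auto
  qed
  have "(\<Sum>a\<in>{1..<int m}. P m S a) = (\<Sum>a\<in>{1..<int m}. card (A a))"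
    unfolding P_def A_def by simp
  also have "\<dots> = card (\<Union>a\<in>{1..<int m}. A a)"
    by (rule card_UN_disjoint[symmetric]) (use fA disj in auto)
  also have "\<dots> = card (S \<times> S) - card ((\<lambda>x. (x, x)) ` S)"
    unfolding U by (rule card_Diff_subset) (use fS in auto)
  also have "card ((\<lambda>x. (x, x)) ` S) = card S" by (rule card_image) (auto simp: inj_on_def)
  also have "card (S \<times> S) = card S * card S" by (simp add: card_cartesian_product)
  finally show ?thesis by (simp add: diff_mult_distrib2)
qed

lemma key:
  assumes S: "S \<subseteq> {0..<int m}" and b: "b \<in> {0..<int m}" "b \<notin> S"
  shows "(\<Sum>a\<in>{1..<int m}. int (Nsol m (insert b S) D a) - int (Nsol m S D a)) = 2 * int (card S)"
proof -
  have fS: "finite S" using S finite_subset by blast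
  have S': "insert b S \<subseteq> {0..<int m}" using S b by auto
  have "(\<Sum>a\<in>{1..<int m}. int (Nsol m (insert b S) D a) - int (Nsol m S D a))
     = (\<Sum>a\<in>{1..<int m}. int (P m (insert b S) a) - int (P m S a))"
    by (simp add: Nsol_P)
  also have "\<dots> = int (\<Sum>a\<in>{1..<int m}. P m (insert b S) a) - int (\<Sum>a\<in>{1..<int m}. P m S a)"
    by (simp add: sum_subtractf)
  also have "\<dots> = int (card (insert b S) * (card (insert b S) - 1)) - int (card S * (card S - 1))"
    using sumP[OF S] sumP[OF S'] by simp
  also have "\<dots> = 2 * int (card S)"
    using fS b(2) by (cases "card S") (auto simp: algebra_simps)
  finally show ?thesis .
qed

lemma count01:
  fixes f :: "'a \<Rightarrow> int"
  assumes "finite A" "\<forall>a\<in>A. f a = 0 \<or> f a = 1"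
  shows "sum f A = int (card {a\<in>A. f a = 1})"
proof -
  have "sum f A = (\<Sum>a\<in>A. if f a = 1 then 1 else 0)"
    using assms(2) by (intro sum.cong) auto
  also have "\<dots> = sum (\<lambda>_. 1) {a\<in>A. f a = 1}"
    using sum.inter_filter[OF assms(1), of "\<lambda>_. (1::int)" "\<lambda>a. f a = 1"] by simp
  finally show ?thesis by simp
qed

lemma sumN:
  assumes "m \<ge> 1" "SDS m k1 k2 mu B D"
  shows "(int m - 1) * mu = int (k1 * (k1 - 1)) + int (k2 * (k2 - 1))"
proof -
  have "(\<Sum>a\<in>{1..<int m}. int (Nsol m B D a)) = (\<Sum>a\<in>{1..<int m}. mu)"
    using assms unfolding SDS_def by (intro sum.cong) auto
  also have "\<dots> = (int m - 1) * mu" using assms(1) by simp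
  finally have "(int m - 1) * mu = (\<Sum>a\<in>{1..<int m}. int (P m B a) + int (P m D a))"
    by (simp add: Nsol_P)
  also have "\<dots> = int (\<Sum>a\<in>{1..<int m}. P m B a) + int (\<Sum>a\<in>{1..<int m}. P m D a)"
    by (simp add: sum.distrib)
  also have "\<dots> = int (k1 * (k1 - 1)) + int (k2 * (k2 - 1))"
    using sumP[of B m] sumP[of D m] assms unfolding SDS_def by simp
  finally show ?thesis .
qed

theorem lemma3:
  fixes m k1 k2 :: nat and mu :: int and B D :: "int set"
  assumes m2: "m \<ge> 2"
    and sds: "SDS m k1 k2 mu B D"
  shows "(\<forall>b \<in> B. ASDS m (k1 - 1) k2 (mu - 1) ((real m - 1) / 2) (B - {b}) D \<longrightarrow>
            real k1 = (real m + 3) / 4 \<and>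
            real_of_int mu = (real m + 3) / 16 + (real k2 ^ 2 - real k2) / (real m - 1))
       \<and> (\<forall>b \<in> {0..<int m} - (B \<union> D). ASDS m (k1 + 1) k2 mu ((real m - 1) / 2) (B \<union> {b}) D \<longrightarrow>
            real k1 = (real m - 1) / 4 \<and>
            real_of_int mu = (real m - 5) / 16 + (real k2 ^ 2 - real k2) / (real m - 1))"
proof -
  have Bs: "B \<subseteq> {0..<int m}" and card1: "card B = k1" and card2: "card D = k2"
    and Nmu: "\<forall>a\<in>{1..<int m}. int (Nsol m B D a) = mu"
    using sds unfolding SDS_def by auto
  have fB: "finite B" using Bs finite_subset by blast
  have hN: "(int m - 1) * mu = int (k1 * (k1 - 1)) + int (k2 * (k2 - 1))" by (rule sumN[OF _ sds]) (use m2 in simp)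
  have hR: "(real m - 1) * real_of_int mu = real k1 * (real k1 - 1) + real k2 ^ 2 - real k2"
  proof -
    have "real_of_int ((int m - 1) * mu) = real_of_int (int (k1 * (k1 - 1)) + int (k2 * (k2 - 1)))"
      using hN by simp
    then show ?thesis
      by (cases k1; cases k2) (auto simp: algebra_simps power2_eq_square)
  qed
  have mpos: "real m - 1 > 0" using m2 by simp
  have fin: "finite {1..<int m}" by simp
  show ?thesis
  proof (intro conjI ballI impI)
    fix b assume bB: "b \<in> B" and as: "ASDS m (k1 - 1) k2 (mu - 1) ((real m - 1) / 2) (B - {b}) D"
    let ?S = "B - {b}"
    have ins: "insert b ?S = B" using bB by auto
    have k1pos: "k1 \<ge> 1" using bB fB card1 card_0_eq by fastforce
    have cS: "card ?S = k1 - 1" using bB fB card1 by simp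
    have sumd: "(\<Sum>a\<in>{1..<int m}. int (Nsol m B D a) - int (Nsol m ?S D a)) = 2 * int (k1 - 1)"
    proof -
      have "?S \<subseteq> {0..<int m}" "b \<in> {0..<int m}" "b \<notin> ?S" using Bs bB by auto
      from key[OF this, of D] show ?thesis unfolding ins cS .
    qed
    have A1: "real (card {a \<in> {1..<int m}. int (Nsol m ?S D a) = mu - 1}) = (real m - 1) / 2"
      and A2: "\<forall>a\<in>{1..<int m}. int (Nsol m ?S D a) = mu - 1 \<or> int (Nsol m ?S D a) = mu"
      using as unfolding ASDS_def by auto
    have "(\<Sum>a\<in>{1..<int m}. int (Nsol m B D a) - int (Nsol m ?S D a))
        = int (card {a \<in> {1..<int m}. int (Nsol m B D a) - int (Nsol m ?S D a) = 1})"
      using A2 Nmu by (intro count01 fin) auto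
    also have "{a \<in> {1..<int m}. int (Nsol m B D a) - int (Nsol m ?S D a) = 1}
        = {a \<in> {1..<int m}. int (Nsol m ?S D a) = mu - 1}"
      using Nmu by auto
    finally have "2 * int (k1 - 1) = int (card {a \<in> {1..<int m}. int (Nsol m ?S D a) = mu - 1})"
      using sumd by simp
    then have "2 * real (k1 - 1) = (real m - 1) / 2" using A1
      by (metis of_int_of_nat_eq of_int_mult of_int_numeral of_nat_mult of_nat_numeral)
    then have e1: "2 * (real k1 - 1) = (real m - 1) / 2" using k1pos by (simp add: of_nat_diff)
    then show "real k1 = (real m + 3) / 4" by (simp add: field_simps)
    have "real_of_int mu = (real k1 * (real k1 - 1) + real k2 ^ 2 - real k2) / (real m - 1)"
      using hR mpos by (simp add: field_simps)
    also have "\<dots> = (real m + 3) / 16 + (real k2 ^ 2 - real k2) / (real m - 1)"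
    proof -
      have k: "real k1 = (real m + 3) / 4" using e1 by (simp add: field_simps)
      have "real k1 * (real k1 - 1) = (real m + 3) / 16 * (real m - 1)"
        unfolding k by (simp add: field_simps)
      then have q: "real k1 * (real k1 - 1) / (real m - 1) = (real m + 3) / 16"
        using mpos by simp
      have "(real k1 * (real k1 - 1) + real k2 ^ 2 - real k2) / (real m - 1)
          = real k1 * (real k1 - 1) / (real m - 1) + (real k2 ^ 2 - real k2) / (real m - 1)"
        by (simp add: add_divide_distrib diff_divide_distrib)
      also have "\<dots> = (real m + 3) / 16 + (real k2 ^ 2 - real k2) / (real m - 1)"
        unfolding q ..
      finally show ?thesis .
    qed
    finally show "real_of_int mu = (real m + 3) / 16 + (real k2 ^ 2 - real k2) / (real m - 1)" .
  next
    fix b assume bB: "b \<in> {0..<int m} - (B \<union> D)"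
      and as: "ASDS m (k1 + 1) k2 mu ((real m - 1) / 2) (B \<union> {b}) D"
    have eqU: "B \<union> {b} = insert b B" by auto
    have sumd: "(\<Sum>a\<in>{1..<int m}. int (Nsol m (insert b B) D a) - int (Nsol m B D a)) = 2 * int k1"
      using key[of B m b D] Bs bB card1 by auto
    have A1: "real (card {a \<in> {1..<int m}. int (Nsol m (insert b B) D a) = mu}) = (real m - 1) / 2"
      and A2: "\<forall>a\<in>{1..<int m}. int (Nsol m (insert b B) D a) = mu \<or> int (Nsol m (insert b B) D a) = mu + 1"
      using as unfolding ASDS_def eqU by auto
    have "(\<Sum>a\<in>{1..<int m}. int (Nsol m (insert b B) D a) - int (Nsol m B D a))
        = int (card {a \<in> {1..<int m}. int (Nsol m (insert b B) D a) - int (Nsol m B D a) = 1})"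
      using A2 Nmu by (intro count01 fin) auto
    also have "{a \<in> {1..<int m}. int (Nsol m (insert b B) D a) - int (Nsol m B D a) = 1}
        = {1..<int m} - {a \<in> {1..<int m}. int (Nsol m (insert b B) D a) = mu}"
      using Nmu A2 by auto
    also have "card \<dots> = card {1..<int m} - card {a \<in> {1..<int m}. int (Nsol m (insert b B) D a) = mu}"
      by (rule card_Diff_subset) (auto intro: finite_subset[OF _ fin])
    finally have e0: "2 * int k1 = int (card {1..<int m} - card {a \<in> {1..<int m}. int (Nsol m (insert b B) D a) = mu})"
      using sumd by simp
    have cle: "card {a \<in> {1..<int m}. int (Nsol m (insert b B) D a) = mu} \<le> card {1..<int m}"
      by (rule card_mono) auto
    have cI: "real (card {1..<int m}) = real m - 1" using m2 by simp
    have "2 * real k1 = real (card {1..<int m}) - real (card {a \<in> {1..<int m}. int (Nsol m (insert b B) D a) = mu})"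
    proof -
      have "real_of_int (2 * int k1) = real_of_int (int (card {1..<int m} - card {a \<in> {1..<int m}. int (Nsol m (insert b B) D a) = mu}))"
        using e0 by simp
      then show ?thesis using cle by (simp add: of_nat_diff)
    qed
    then have e1: "2 * real k1 = (real m - 1) / 2" using A1 cI by simp
    then show "real k1 = (real m - 1) / 4" by (simp add: field_simps)
    have "real_of_int mu = (real k1 * (real k1 - 1) + real k2 ^ 2 - real k2) / (real m - 1)"
      using hR mpos by (simp add: field_simps)
    also have "\<dots> = (real m - 5) / 16 + (real k2 ^ 2 - real k2) / (real m - 1)"
    proof -
      have k: "real k1 = (real m - 1) / 4" using e1 by (simp add: field_simps)
      have "real k1 * (real k1 - 1) = (real m - 5) / 16 * (real m - 1)"
        unfolding k by (simp add: field_simps)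
      then have q: "real k1 * (real k1 - 1) / (real m - 1) = (real m - 5) / 16"
        using mpos by simp
      have "(real k1 * (real k1 - 1) + real k2 ^ 2 - real k2) / (real m - 1)
          = real k1 * (real k1 - 1) / (real m - 1) + (real k2 ^ 2 - real k2) / (real m - 1)"
        by (simp add: add_divide_distrib diff_divide_distrib)
      also have "\<dots> = (real m - 5) / 16 + (real k2 ^ 2 - real k2) / (real m - 1)"
        unfolding q ..
      finally show ?thesis .
    qed
    finally show "real_of_int mu = (real m - 5) / 16 + (real k2 ^ 2 - real k2) / (real m - 1)" .
  qed
qed

end
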